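(* Let $\mathcal R_1$ be a collection of $\theta_1$ independent random RDR sets, let $S^*$ be the size-$k$ set returned by the greedy algorithm for weighted maximum coverage on $\mathcal R_1$, and let $\Lambda_1(S^* )=\frac{\hat{INF}_F}{n}\mathcal W_{\mathcal R_1}(S^* )$. Let $S^o$ be a size-$k$ set maximizing $\sigma$. For any $\delta\in(0,1)$, with $a=\ln(1/\delta)$, $$\Pr\Big[\sigma(S^o)\ \le\ \Big(\sqrt{\tfrac{\Lambda_1(S^* )}{1-1/e}+a}+\sqrt a\Big)^2\frac{n}{\theta_1(1-\epsilon')}\Big]\ \ge\ 1-\delta .$$
   Context: Setting: $G=(V,E)$ is a directed graph with $n=|V|$ nodes. A misinformation campaign $F$ spreads in $G$ under the paper's competitive propagation model (TCIC); $INF_F$ is the expected number of nodes reached by $F$. $\sigma(\cdot)$ denotes either of the two submodular set functions (lower bound $\underline\mu$ or upper bound $\overline\mu$ of the expected misinformation-mitigation function). $\hat{INF}_F$ is an $(\epsilon',\delta')$-approximation of $INF_F$, and $\Gamma=\hat{INF}_F/INF_F$; throughout, $\hat{INF}_F$ is treated as fixed with $1-\epsilon'\le\Gamma\le1+\epsilon'$, and $\hat{INF}_F\le n$. Each random RDR set (generated by importance sampling) carries a weight; $\mathcal W_{\mathcal R}(S)$ is the total weight of RDR sets in $\mathcal R$ covered by $S$, and $\frac{\hat{INF}_F}{n}\mathcal W_{\mathcal R}(S)=\sum_i\hat Z_i(S)$ where $\hat Z_i(S)$ is the estimator of the $i$-th set, with $\mathbb E[\hat Z_i(S)]=\Gamma\sigma(S)/n$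 and, for $p=\mathbb E[\hat Z_i(S)]$, $\lambda>0$: $\Pr[\sum_{i\le\theta}\hat Z_i(S)-\theta p\le-\lambda]\le\exp(-\lambda^2/(4\theta p\hat{INF}_F/n))$. The greedy algorithm picks $k$ nodes greedily maximizing total covered weight, and guarantees $\Lambda_1(S^* )\ge(1-1/e)\Lambda_1(S^o)$. *)

theory Defs
  imports "HOL-Probability.Probability"
begin

text \<open>RDR sets are modelled as random sets R i (i-th sample, i < theta) with random
 importance-sampling weights w i. A node set S covers RDR set i iff S meets it.\<close>

definition covers :: "'v set \<Rightarrow> 'v set \<Rightarrow> bool" where
  "covers S Rs \<longleftrightarrow> S \<inter> Rs \<noteq> {}"

definition cov_weight :: "nat \<Rightarrow> (nat \<Rightarrow> 'a \<Rightarrow> 'v set) \<Rightarrow> (nat \<Rightarrow> 'a \<Rightarrow> real) \<Rightarrow> 'v set \<Rightarrow> 'a \<Rightarrow> real" where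
  "cov_weight \<theta> R w S \<omega> = (\<Sum>i<\<theta>. if covers S (R i \<omega>) then w i \<omega> else 0)"

definition Zhat :: "real \<Rightarrow> nat \<Rightarrow> (nat \<Rightarrow> 'a \<Rightarrow> 'v set) \<Rightarrow> (nat \<Rightarrow> 'a \<Rightarrow> real) \<Rightarrow> nat \<Rightarrow> 'v set \<Rightarrow> 'a \<Rightarrow> real" where
  "Zhat INFh n R w i S \<omega> = INFh / real n * (if covers S (R i \<omega>) then w i \<omega> else 0)"

definition Lambda :: "real \<Rightarrow> nat \<Rightarrow> nat \<Rightarrow> (nat \<Rightarrow> 'a \<Rightarrow> 'v set) \<Rightarrow> (nat \<Rightarrow> 'a \<Rightarrow> real) \<Rightarrow> 'v set \<Rightarrow> 'a \<Rightarrow> real" where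
  "Lambda INFh n \<theta> R w S \<omega> = INFh / real n * cov_weight \<theta> R w S \<omega>"

end

theory Submission
  imports Defs
begin


lemma pred_eq_count:
  assumes "f \<in> measurable M (count_space UNIV)"
  shows "Measurable.pred M (\<lambda>x. (P :: 'b \<Rightarrow> bool) (f x))"
proof -
  have "{x \<in> space M. P (f x)} = f -` {y. P y} \<inter> space M" by auto
  also have "\<dots> \<in> sets M" using measurable_sets[OF assms, of "{y. P y}"] by simp
  finally show ?thesis unfolding Measurable.pred_def .
qed

lemma cov_meas:
  fixes R :: "nat \<Rightarrow> 'a \<Rightarrow> 'v set"
  assumes "\<And>i. R i \<in> measurable M (count_space UNIV)"
    and "\<And>i. w i \<in> borel_measurable M"
  shows "(\<lambda>\<omega>. Lambda c n \<theta> R w S \<omega>) \<in> borel_measurable M"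
proof -
  have [measurable]: "\<And>i. Measurable.pred M (\<lambda>\<omega>. covers S (R i \<omega>))"
    using pred_eq_count[OF assms(1), where P="covers S"] by blast
  note [measurable] = assms(2)
  show ?thesis unfolding Lambda_def cov_weight_def by measurable
qed

lemma pred_dep:
  assumes fin: "finite V" and sub: "\<And>\<omega>. Sf \<omega> \<in> Pow V"
    and Sm: "Sf \<in> measurable M (count_space UNIV)"
    and P: "\<And>S. S \<in> Pow V \<Longrightarrow> Measurable.pred M ((P :: 'v set \<Rightarrow> 'a \<Rightarrow> bool) S)"
  shows "Measurable.pred M (\<lambda>\<omega>. P (Sf \<omega>) \<omega>)"
proof -
  have eq: "(\<lambda>\<omega>. P (Sf \<omega>) \<omega>) = (\<lambda>\<omega>. \<exists>S\<in>Pow V. Sf \<omega> = S \<and> P S \<omega>)"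
    using sub by blast
  have [measurable]: "\<And>S. Measurable.pred M (\<lambda>\<omega>. Sf \<omega> = S)"
    using pred_eq_count[OF Sm] by fast
  have "Measurable.pred M (\<lambda>\<omega>. \<exists>S\<in>Pow V. Sf \<omega> = S \<and> P S \<omega>)"
    using fin P by (intro pred_intros_finite(4)) auto
  then show ?thesis using eq by simp
qed

theorem mainTheorem6:
  fixes M :: "'a measure"
    and V :: "'v set" and n k \<theta>1 :: nat
    and \<sigma> :: "'v set \<Rightarrow> real"
    and INFF INFh \<epsilon>' \<Gamma> \<delta> :: real
    and R :: "nat \<Rightarrow> 'a \<Rightarrow> 'v set" and w :: "nat \<Rightarrow> 'a \<Rightarrow> real"
    and Sstar :: "'a \<Rightarrow> 'v set" and So :: "'v set"
  assumes prob: "prob_space M"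
    and finV: "finite V" and n_def: "n = card V" and n_pos: "n > 0"
    and theta_pos: "\<theta>1 > 0"
    and R_meas: "\<And>i. R i \<in> measurable M (count_space UNIV)"
    and R_sub: "\<And>i \<omega>. R i \<omega> \<subseteq> V"
    and w_meas: "\<And>i. w i \<in> borel_measurable M"
    and w_nonneg: "\<And>i \<omega>. w i \<omega> \<ge> 0"
    and INF_pos: "INFF > 0" and INFh_pos: "INFh > 0" and INFh_le: "INFh \<le> real n"
    and eps: "0 < \<epsilon>'" "\<epsilon>' < 1"
    and Gamma_def: "\<Gamma> = INFh / INFF"
    and Gamma_bounds: "1 - \<epsilon>' \<le> \<Gamma>" "\<Gamma> \<le> 1 + \<epsilon>'"
    and expect: "\<And>i S. i < \<theta>1 \<Longrightarrow> S \<subseteq> V \<Longrightarrow>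
        integrable M (Zhat INFh n R w i S) \<and>
        prob_space.expectation M (Zhat INFh n R w i S) = \<Gamma> * \<sigma> S / real n"
    and conc: "\<And>S lam. S \<subseteq> V \<Longrightarrow> lam > 0 \<Longrightarrow>
        measure M {\<omega> \<in> space M. (\<Sum>i<\<theta>1. Zhat INFh n R w i S \<omega>)
              - real \<theta>1 * (\<Gamma> * \<sigma> S / real n) \<le> - lam}
          \<le> exp (- lam\<^sup>2 / (4 * real \<theta>1 * (\<Gamma> * \<sigma> S / real n) * INFh / real n))"
    and So_sub: "So \<subseteq> V" and So_card: "card So = k"
    and So_max: "\<And>S. S \<subseteq> V \<Longrightarrow> card S = k \<Longrightarrow> \<sigma> S \<le> \<sigma> So"
    and Sstar_meas: "Sstar \<in> measurable M (count_space UNIV)"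
    and Sstar_sub: "\<And>\<omega>. Sstar \<omega> \<subseteq> V" and Sstar_card: "\<And>\<omega>. card (Sstar \<omega>) = k"
    and greedy: "\<And>\<omega>. Lambda INFh n \<theta>1 R w (Sstar \<omega>) \<omega>
                    \<ge> (1 - 1 / exp 1) * Lambda INFh n \<theta>1 R w So \<omega>"
    and delta: "0 < \<delta>" "\<delta> < 1"
  shows "measure M {\<omega> \<in> space M. \<sigma> So \<le>
           (sqrt (Lambda INFh n \<theta>1 R w (Sstar \<omega>) \<omega> / (1 - 1 / exp 1) + ln (1 / \<delta>))
             + sqrt (ln (1 / \<delta>)))\<^sup>2 * real n / (real \<theta>1 * (1 - \<epsilon>'))}
         \<ge> 1 - \<delta>"
  proof -
  interpret prob_space M by (rule prob)
  define x where "x = \<sigma> So"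
  define a where "a = ln (1 / \<delta>)"
  define e1 where "e1 = 1 - 1 / exp (1::real)"
  have e1_pos: "e1 > 0" unfolding e1_def by simp
  have a_pos: "a > 0" unfolding a_def using delta by simp
  define h where "h = (\<lambda>L::real. (sqrt (L / (1 - 1 / exp 1) + ln (1 / \<delta>))
             + sqrt (ln (1 / \<delta>)))\<^sup>2 * real n / (real \<theta>1 * (1 - \<epsilon>')))"
  define G where "G = {\<omega> \<in> space M. \<sigma> So \<le> h (Lambda INFh n \<theta>1 R w (Sstar \<omega>) \<omega>)}"
  have hnn: "h L \<ge> 0" for L unfolding h_def using eps by simp
  have G_sets: "G \<in> sets M"
  proof -
    have "Measurable.pred M (\<lambda>\<omega>. \<sigma> So \<le> h (Lambda INFh n \<theta>1 R w (Sstar \<omega>) \<omega>))"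
    proof (rule pred_dep[OF finV _ Sstar_meas, where P = "\<lambda>S \<omega>. \<sigma> So \<le> h (Lambda INFh n \<theta>1 R w S \<omega>)"])
      show "Sstar \<omega> \<in> Pow V" for \<omega> using Sstar_sub by auto
      fix S
      have [measurable]: "(\<lambda>\<omega>. Lambda INFh n \<theta>1 R w S \<omega>) \<in> borel_measurable M"
        by (rule cov_meas[OF R_meas w_meas])
      show "Measurable.pred M (\<lambda>\<omega>. \<sigma> So \<le> h (Lambda INFh n \<theta>1 R w S \<omega>))"
        unfolding h_def by measurable
    qed
    then show ?thesis unfolding G_def pred_def .
  qed
  have goal: "measure M G \<ge> 1 - \<delta>"
  proof (cases "x \<le> 0")
    case True
    then have "G = space M" unfolding G_def x_def using hnn by (auto intro: order_trans)
    then show ?thesis using delta prob_space.prob_space[OF prob] by simp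
  next
    case False
    have Gpos: "\<Gamma> > 0" using Gamma_bounds eps by linarith
    define \<mu> where "\<mu> = real \<theta>1 * (\<Gamma> * \<sigma> So / real n)"
    have mu_pos: "\<mu> > 0" unfolding \<mu>_def using False x_def Gpos theta_pos n_pos by simp
    define lam where "lam = 2 * sqrt (a * \<mu>)"
    have lam_pos: "lam > 0" unfolding lam_def using a_pos mu_pos by simp
    define B where "B = {\<omega> \<in> space M. (\<Sum>i<\<theta>1. Zhat INFh n R w i So \<omega>) - \<mu> \<le> - lam}"
    have Bb: "measure M B \<le> exp (- lam\<^sup>2 / (4 * real \<theta>1 * (\<Gamma> * \<sigma> So / real n) * INFh / real n))"
      using conc[OF So_sub lam_pos] unfolding B_def \<mu>_def .
    have lam2: "lam\<^sup>2 = 4 * a * \<mu>" unfolding lam_def using a_pos mu_pos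
      by (simp add: power_mult_distrib)
    have "- lam\<^sup>2 / (4 * real \<theta>1 * (\<Gamma> * \<sigma> So / real n) * INFh / real n) = - a * (real n / INFh)"
      unfolding lam2 using mu_pos INFh_pos n_pos False x_def Gpos theta_pos unfolding \<mu>_def by (simp add: field_simps)
    also have "\<dots> \<le> - a"
    proof -
      have "real n / INFh \<ge> 1" using INFh_le INFh_pos by simp
      then show ?thesis using a_pos
        by (metis minus_mult_left mult.right_neutral mult_left_mono neg_le_iff_le less_imp_le)
    qed
    finally have "measure M B \<le> exp (- a)" using Bb by (meson exp_le_cancel_iff order_trans)
    also have "exp (- a) = \<delta>" unfolding a_def using delta by (simp add: ln_div exp_minus)
    finally have Bd: "measure M B \<le> \<delta>" .
    have B_sets: "B \<in> sets M"
    proof -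
      have [measurable]: "\<And>i. Measurable.pred M (\<lambda>\<omega>. covers So (R i \<omega>))"
        using pred_eq_count[OF R_meas, where P="covers So"] by blast
      note [measurable] = w_meas
      show ?thesis unfolding B_def Zhat_def by measurable
    qed
    have sub: "space M - B \<subseteq> G"
    proof
      fix \<omega> assume om: "\<omega> \<in> space M - B"
      define Z where "Z = Lambda INFh n \<theta>1 R w So \<omega>"
      have Zeq: "Z = (\<Sum>i<\<theta>1. Zhat INFh n R w i So \<omega>)"
        unfolding Z_def Lambda_def cov_weight_def Zhat_def by (simp add: sum_distrib_left)
      have Zgt: "Z > \<mu> - lam" using om unfolding B_def Zeq by auto
      define L where "L = Lambda INFh n \<theta>1 R w (Sstar \<omega>) \<omega> / e1"
      have LZ: "L \<ge> Z" unfolding L_def Z_def using greedy[of \<omega>] e1_pos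
        by (simp add: e1_def pos_le_divide_eq mult.commute)
      have sq: "(sqrt \<mu> - sqrt a)\<^sup>2 = \<mu> - lam + a"
        unfolding lam_def using mu_pos a_pos
        by (simp add: power2_diff real_sqrt_mult)
      have La: "L + a \<ge> (sqrt \<mu> - sqrt a)\<^sup>2" using sq LZ Zgt by linarith
      have "sqrt \<mu> - sqrt a \<le> sqrt (L + a)"
      proof -
        have "\<bar>sqrt \<mu> - sqrt a\<bar> \<le> sqrt (L + a)"
          using real_sqrt_le_mono[OF La] by simp
        then show ?thesis by linarith
      qed
      then have "sqrt \<mu> \<le> sqrt (L + a) + sqrt a" by linarith
      then have "(sqrt \<mu>)\<^sup>2 \<le> (sqrt (L + a) + sqrt a)\<^sup>2"
        using mu_pos by (intro power_mono) auto
      then have mule: "\<mu> \<le> (sqrt (L + a) + sqrt a)\<^sup>2" using mu_pos by simp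
      define s where "s = (sqrt (L + a) + sqrt a)\<^sup>2"
      have s_nn: "s \<ge> 0" unfolding s_def by simp
      have "real \<theta>1 * (1 - \<epsilon>') * x / real n \<le> \<mu>"
      proof -
        have "(1 - \<epsilon>') * x \<le> \<Gamma> * x" using Gamma_bounds False by (intro mult_right_mono) auto
        then show ?thesis unfolding \<mu>_def x_def using theta_pos n_pos
          by (simp add: divide_right_mono mult_left_mono)
      qed
      then have "real \<theta>1 * (1 - \<epsilon>') * x / real n \<le> s" using mule s_def by simp
      then have "x \<le> s * real n / (real \<theta>1 * (1 - \<epsilon>'))"
        using theta_pos n_pos eps by (simp add: field_simps)
      moreover have "h (Lambda INFh n \<theta>1 R w (Sstar \<omega>) \<omega>) = s * real n / (real \<theta>1 * (1 - \<epsilon>'))"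
        unfolding h_def s_def L_def e1_def a_def ..
      ultimately show "\<omega> \<in> G" unfolding G_def x_def using om by auto
    qed
    have "1 - \<delta> \<le> 1 - measure M B" using Bd by simp
    also have "\<dots> = measure M (space M - B)" using prob_compl[OF B_sets] by simp
    also have "\<dots> \<le> measure M G" using sub G_sets by (intro finite_measure_mono) auto
    finally show ?thesis .
  qed
  then show ?thesis unfolding G_def h_def .
qed

end
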